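(* Let $F$ be any field, $N\in\mathbb{N}$, and $p,p'\in\mathbb{N}$ with $p+p'\le N+1$. If $x\in F^{N+1}$ satisfies $\operatorname{rank}(H_{p-1,p'}(x))\le p'$, then $\operatorname{rank}(H_{p-1,p'}(x))\le \operatorname{rank}(H_{p,p'-1}(x))$.
   Context: $\mathbb{N}=\{0,1,2,\ldots\}$. For $N\in\mathbb{N}$, $x=(x_0,\ldots,x_N)\in F^{N+1}$ and integers $s,t\ge -1$ with $s+t\le N$, the Hankel matrix $H_{s,t}(x)$ is the $(s+1)\times(t+1)$ matrix $(x_{i+j})_{0\le i\le s,\,0\le j\le t}$ (a matrix with zero rows or columns has rank $0$). *)

theory Defs
  imports "Jordan_Normal_Form.DL_Rank"
begin

text \<open>Hankel matrix H_{s,t}(x) with s+1 rows and t+1 columns, given by the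
  numbers of rows r = s+1 and columns c = t+1 (so s,t \<ge> -1 correspond to r,c \<ge> 0).\<close>
definition hankel :: "nat \<Rightarrow> nat \<Rightarrow> 'a vec \<Rightarrow> 'a mat" where
  "hankel r c x = mat r c (\<lambda>(i, j). x $ (i + j))"

definition mrank :: "'a::field mat \<Rightarrow> nat" where
  "mrank A = vec_space.rank (dim_row A) A"

end

theory Submission imports Defs "Jordan_Normal_Form.Matrix_Kernel"
begin

lemma (in linear_map) inj_dim_le:
  assumes inj: "inj_on T (carrier V)" and fV: "V.fin_dim" and fW: "W.fin_dim"
  shows "V.dim \<le> W.dim"
proof -
  obtain B where fB: "finite B" and bB: "V.basis B" using V.finite_basis_exists[OF fV] by blast
  have BV: "B \<subseteq> carrier V" and liB: "V.module.lin_indpt B" using bB unfolding V.basis_def by auto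
  have TB: "T ` B \<subseteq> carrier W" using BV by auto
  have li: "W.module.lin_indpt (T ` B)"
  proof (rule W.module.finite_lin_indpt2)
    show "finite (T ` B)" using fB by simp
    show "T ` B \<subseteq> carrier W" by fact
    fix a assume a: "a \<in> T ` B \<rightarrow> carrier K" and lc: "W.module.lincomb a (T ` B) = \<zero>\<^bsub>W\<^esub>"
    have "W.module.lincomb a (T ` B) = T (V.module.lincomb (a \<circ> T) B)"
      by (rule lincomb_linear_image[OF inj BV a fB])
    moreover have "V.module.lincomb (a \<circ> T) B \<in> carrier V"
      using BV a by (intro V.module.lincomb_closed) auto
    ultimately have "V.module.lincomb (a \<circ> T) B = \<zero>\<^bsub>V\<^esub>"
      using lc inj by (metis V.module.M.zero_closed f0_is_0 inj_on_def)
    moreover have "(a \<circ> T) \<in> B \<rightarrow> carrier K" using a by auto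
    ultimately have "(a \<circ> T) \<in> B \<rightarrow> {\<zero>\<^bsub>K\<^esub>}"
      using V.not_lindepD[OF liB fB order_refl] by blast
    then show "\<forall>v\<in>T ` B. a v = \<zero>\<^bsub>K\<^esub>" by auto
  qed
  have "card (T ` B) = card B" using inj BV by (meson card_image inj_on_subset)
  moreover have "V.dim = card B" using V.dim_basis[OF fB bB] .
  moreover have "card (T ` B) \<le> W.dim" using W.li_le_dim(2)[OF fW TB li] .
  ultimately show ?thesis by simp
qed

lemma rank_nullity_mat:
  fixes A :: "'a::field mat"
  assumes A: "A \<in> carrier_mat nr nc"
  shows "mrank A + kernel.dim nc A = nc"
proof -
  interpret NC: vec_space "TYPE('a)" nc .
  interpret NR: vec_space "TYPE('a)" nr .
  interpret LM: linear_map class_ring NC.V NR.V "\<lambda>v. A *\<^sub>v v"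
  proof (unfold_locales)
    show "(\<lambda>v. A *\<^sub>v v) \<in> LinearCombinations.module_hom class_ring NC.V NR.V"
      using A by (auto simp: LinearCombinations.module_hom_def mult_add_distrib_mat_vec mult_mat_vec)
  qed
  have im: "LM.imT = NR.span (set (cols A))"
    using NR.col_space_eq[OF A] A unfolding LM.im_def NR.col_space_def by auto
  have ker: "LM.kerT = mat_kernel A"
    using A unfolding LM.ker_def mat_kernel_def by auto
  have "vectorspace.dim class_ring (NR.vs LM.imT) + vectorspace.dim class_ring (NC.vs LM.kerT) = NC.dim"
    by (rule LM.rank_nullity) simp
  moreover have "mrank A = vectorspace.dim class_ring (NR.vs LM.imT)"
    using A unfolding mrank_def im by (simp add: NR.rank_def)
  moreover have "kernel.dim nc A = vectorspace.dim class_ring (NC.vs LM.kerT)"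
    unfolding ker by simp
  ultimately show ?thesis using NC.dim_is_n by simp
qed

lemma kernel_fin_dim:
  fixes A :: "'a::field mat"
  assumes A: "A \<in> carrier_mat nr nc"
  shows "vectorspace.fin_dim class_ring ((module_vec TYPE('a) nc)\<lparr>carrier := mat_kernel A\<rparr>)"
proof -
  interpret KA: kernel nr nc A by unfold_locales (rule A)
  obtain Bs where "finite Bs" "KA.basis Bs" using kernel_basis_exists[OF A] by blast
  then show ?thesis unfolding KA.Ker.fin_dim_def KA.Ker.basis_def by auto
qed

lemma kdim_le_inj:
  fixes A B :: "'a::field mat" and f :: "'a vec \<Rightarrow> 'a vec"
  assumes A: "A \<in> carrier_mat nr nc" and B: "B \<in> carrier_mat mr mc"
  and maps: "\<And>v. v \<in> mat_kernel A \<Longrightarrow> f v \<in> mat_kernel B"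
  and add: "\<And>v w. v \<in> mat_kernel A \<Longrightarrow> w \<in> mat_kernel A \<Longrightarrow> f (v + w) = f v + f w"
  and smult: "\<And>c v. v \<in> mat_kernel A \<Longrightarrow> f (c \<cdot>\<^sub>v v) = c \<cdot>\<^sub>v f v"
  and inj: "\<And>v. v \<in> mat_kernel A \<Longrightarrow> f v = 0\<^sub>v mc \<Longrightarrow> v = 0\<^sub>v nc"
  shows "kernel.dim nc A \<le> kernel.dim mc B"
proof -
  interpret KA: kernel nr nc A by unfold_locales (rule A)
  interpret KB: kernel mr mc B by unfold_locales (rule B)
  interpret LM: linear_map class_ring KA.VK KB.VK f
  proof (unfold_locales)
    show "f \<in> LinearCombinations.module_hom class_ring KA.VK KB.VK"
      using maps add smult by (auto simp: LinearCombinations.module_hom_def)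
  qed
  have "inj_on f (carrier KA.VK)"
  proof (rule LM.Ke0_imp_inj)
    show "carrier (KA.Ker.vs LM.kerT) = {\<zero>\<^bsub>KA.VK\<^esub>}"
      using inj KA.Ker.zero_closed LM.f0_is_0 unfolding LM.ker_def by auto
  qed
  from LM.inj_dim_le[OF this kernel_fin_dim[OF A] kernel_fin_dim[OF B]]
  show ?thesis by simp
qed

lemma mat_mult_idx:
  assumes "i < nr" "dim_vec v = nc"
  shows "(mat nr nc g *\<^sub>v v) $ i = (\<Sum>j<nc. g (i,j) * v $ j)"
  using assms by (simp add: mult_mat_vec_def scalar_prod_def atLeast0LessThan)

lemma kernel_nonzero:
  fixes A :: "'a::field mat"
  assumes A: "A \<in> carrier_mat nr nc" and d: "kernel.dim nc A \<noteq> 0"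
  shows "\<exists>v \<in> mat_kernel A. v \<noteq> 0\<^sub>v nc"
proof -
  interpret KA: kernel nr nc A by unfold_locales (rule A)
  obtain Bs where fB: "finite Bs" and bB: "KA.basis Bs" using kernel_basis_exists[OF A] by blast
  have "KA.dim = card Bs" using KA.Ker.dim_basis[OF fB bB] .
  with d obtain b where b: "b \<in> Bs" by fastforce
  have "b \<in> mat_kernel A" using bB b unfolding KA.Ker.basis_def by auto
  moreover have U: "(UNIV::'a set) \<noteq> {0}" by (metis UNIV_I singletonD zero_neq_one)
  moreover have "b \<noteq> 0\<^sub>v nc"
    using U KA.Ker.zero_nin_lin_indpt[of Bs] bB b unfolding KA.Ker.basis_def by auto
  ultimately show ?thesis by blast
qed

theorem lemma7:
  fixes x :: "'a::field vec" and N p p' :: nat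
  assumes "dim_vec x = N + 1"
    and "p + p' \<le> N + 1"
    and "mrank (hankel p (p' + 1) x) \<le> p'"
  shows "mrank (hankel p (p' + 1) x) \<le> mrank (hankel (p + 1) p' x)"
proof -
  define H where "H = hankel p (p' + 1) x"
  define H' where "H' = hankel (p + 1) p' x"
  have Hc: "H \<in> carrier_mat p (p'+1)" unfolding H_def hankel_def by auto
  have H'c: "H' \<in> carrier_mat (p+1) p'" unfolding H'_def hankel_def by auto
  have rnH: "mrank H + kernel.dim (p'+1) H = p'+1" by (rule rank_nullity_mat[OF Hc])
  have rnH': "mrank H' + kernel.dim p' H' = p'" by (rule rank_nullity_mat[OF H'c])
  show ?thesis
  proof (cases "kernel.dim p' H' = 0")
    case True
    then show ?thesis using rnH' assms(3) unfolding H_def[symmetric] H'_def[symmetric] by simp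
  next
    case False
    obtain a0 where a0: "a0 \<in> mat_kernel H'" "a0 \<noteq> 0\<^sub>v p'"
      using kernel_nonzero[OF H'c False] by blast
    have a0c: "a0 \<in> carrier_vec p'" using a0 mat_kernelD[OF H'c] by blast
    define S where "S = {j. j < p' \<and> (\<exists>c\<in>mat_kernel H'. c $ j \<noteq> 0)}"
    have "S \<noteq> {}"
    proof
      assume "S = {}"
      then have "\<forall>j<p'. a0 $ j = 0" using a0(1) unfolding S_def by auto
      then have "a0 = 0\<^sub>v p'" using a0c by (intro eq_vecI) auto
      then show False using a0(2) by simp
    qed
    have fS: "finite S" unfolding S_def by auto
    define k where "k = Max S"
    have "k \<in> S" unfolding k_def using Max_in[OF fS \<open>S \<noteq> {}\<close>] .
    then obtain a where a: "a \<in> mat_kernel H'" "a $ k \<noteq> 0" and kp: "k < p'"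
      unfolding S_def by auto
    have maxk: "c $ j = 0" if "c \<in> mat_kernel H'" "k < j" "j < p'" for c j
    proof (rule ccontr)
      assume "c $ j \<noteq> 0"
      then have "j \<in> S" using that unfolding S_def by auto
      then have "j \<le> k" unfolding k_def using Max_ge[OF fS] by auto
      then show False using that by simp
    qed
    have p'0: "0 < p'" using kp by simp
    define G where "G = mat (p+1) (p'+1) (\<lambda>(i,j). if j < p' then x $ (i+j) else x $ i)"
    have Gc: "G \<in> carrier_mat (p+1) (p'+1)" unfolding G_def by auto
    have colsG: "set (cols G) = set (cols H')"
    proof -
      have cG: "col G j = col H' (if j < p' then j else 0)" if "j < p'+1" for j
        using that p'0 unfolding G_def H'_def hankel_def by (intro eq_vecI) auto
      show ?thesis
      proof
        show "set (cols G) \<subseteq> set (cols H')"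
        proof
          fix w assume "w \<in> set (cols G)"
          then obtain j where j: "j < p'+1" "w = col G j" using Gc by (auto simp: in_set_conv_nth)
          then show "w \<in> set (cols H')" using cG[OF j(1)] H'c p'0 unfolding cols_def by auto
        qed
        show "set (cols H') \<subseteq> set (cols G)"
        proof
          fix w assume "w \<in> set (cols H')"
          then obtain j where j: "j < p'" "w = col H' j" using H'c by (auto simp: in_set_conv_nth)
          then have "w = col G j" using cG[of j] by simp
          then show "w \<in> set (cols G)" using j Gc unfolding cols_def by auto
        qed
      qed
    qed
    have rGH': "mrank G = mrank H'"
      using Gc H'c colsG unfolding mrank_def by (simp add: vec_space.rank_def)
    have rnG: "mrank G + kernel.dim (p'+1) G = p'+1" by (rule rank_nullity_mat[OF Gc])
    define bm where "bm v = vec p' (\<lambda>i. v $ i + (if i = 0 then v $ p' else 0))" for v :: "'a vec"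
    define E1 where "E1 c = vec (p'+1) (\<lambda>i. if i < p' then c $ i else 0)" for c :: "'a vec"
    define E2 where "E2 c = vec (p'+1) (\<lambda>i. if i = 0 then 0 else c $ (i - 1))" for c :: "'a vec"
    define f where "f v = E1 (bm v) + (v $ p') \<cdot>\<^sub>v E2 a" for v
    have K1: "bm v \<in> mat_kernel H'" if v: "v \<in> mat_kernel G" for v
    proof -
      have vc: "v \<in> carrier_vec (p'+1)" and Gv: "G *\<^sub>v v = 0\<^sub>v (p+1)"
        using mat_kernelD[OF Gc v] by auto
      have "H' *\<^sub>v bm v = 0\<^sub>v (p+1)"
      proof (rule eq_vecI)
        fix i assume "i < dim_vec (0\<^sub>v (p+1) :: 'a vec)"
        then have i: "i < p+1" by simp
        have "(H' *\<^sub>v bm v) $ i = (\<Sum>j<p'. x$(i+j) * (v$j + (if j=0 then v$p' else 0)))"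
          unfolding H'_def hankel_def using i by (subst mat_mult_idx) (auto simp: bm_def)
        also have "\<dots> = (\<Sum>j<p'. x$(i+j) * v$j + (if j = 0 then x$(i+j) * v$p' else 0))"
          by (rule sum.cong) (auto simp: distrib_left)
        also have "\<dots> = (\<Sum>j<p'. x$(i+j) * v$j) + (\<Sum>j<p'. if j = 0 then x$(i+j) * v$p' else 0)"
          by (rule sum.distrib)
        also have "\<dots> = (\<Sum>j<p'. x$(i+j) * v$j) + x$i * v$p'"
          using p'0 by (subst sum.delta) auto
        also have "\<dots> = (\<Sum>j<p'. (if j < p' then x $ (i+j) else x $ i) * v $ j)
             + (if p' < p' then x $ (i+p') else x $ i) * v $ p'"
        proof -
          have "(\<Sum>j<p'. (if j < p' then x $ (i+j) else x $ i) * v $ j) = (\<Sum>j<p'. x$(i+j) * v$j)"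
            by (rule sum.cong) auto
          then show ?thesis by simp
        qed
        also have "\<dots> = (\<Sum>j<p'+1. (if j < p' then x $ (i+j) else x $ i) * v $ j)"
          by (simp only: Suc_eq_plus1[symmetric] sum.lessThan_Suc)
        also have "\<dots> = (G *\<^sub>v v) $ i"
          unfolding G_def using i vc by (subst mat_mult_idx) auto
        also have "\<dots> = 0\<^sub>v (p+1) $ i" using Gv by simp
        finally show "(H' *\<^sub>v bm v) $ i = 0\<^sub>v (p+1) $ i" .
      qed (use H'c in auto)
      moreover have "bm v \<in> carrier_vec p'" unfolding bm_def by auto
      ultimately show ?thesis using mat_kernelI[OF H'c] by blast
    qed
    have K2: "E1 c \<in> mat_kernel H" if c: "c \<in> mat_kernel H'" for c
    proof -
      have cc: "c \<in> carrier_vec p'" and Hc': "H' *\<^sub>v c = 0\<^sub>v (p+1)"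
        using mat_kernelD[OF H'c c] by auto
      have "H *\<^sub>v E1 c = 0\<^sub>v p"
      proof (rule eq_vecI)
        fix i assume "i < dim_vec (0\<^sub>v p :: 'a vec)"
        then have i: "i < p" by simp
        have "(H *\<^sub>v E1 c) $ i = (\<Sum>j<p'+1. x$(i+j) * (if j < p' then c $ j else 0))"
          unfolding H_def hankel_def using i by (subst mat_mult_idx) (auto simp: E1_def)
        also have "\<dots> = (\<Sum>j<p'. x$(i+j) * (if j < p' then c $ j else 0))"
          by (simp only: Suc_eq_plus1[symmetric] sum.lessThan_Suc) simp
        also have "\<dots> = (\<Sum>j<p'. x$(i+j) * c $ j)"
          by (rule sum.cong) auto
        also have "\<dots> = (H' *\<^sub>v c) $ i"
          unfolding H'_def hankel_def using i cc by (subst mat_mult_idx) auto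
        also have "\<dots> = 0" using Hc' i by simp
        finally show "(H *\<^sub>v E1 c) $ i = 0\<^sub>v p $ i" using i by simp
      qed (use Hc in auto)
      moreover have "E1 c \<in> carrier_vec (p'+1)" unfolding E1_def by auto
      ultimately show ?thesis using mat_kernelI[OF Hc] by blast
    qed
    have K3: "E2 c \<in> mat_kernel H" if c: "c \<in> mat_kernel H'" for c
    proof -
      have cc: "c \<in> carrier_vec p'" and Hc': "H' *\<^sub>v c = 0\<^sub>v (p+1)"
        using mat_kernelD[OF H'c c] by auto
      have "H *\<^sub>v E2 c = 0\<^sub>v p"
      proof (rule eq_vecI)
        fix i assume "i < dim_vec (0\<^sub>v p :: 'a vec)"
        then have i: "i < p" by simp
        have "(H *\<^sub>v E2 c) $ i = (\<Sum>j<p'+1. x$(i+j) * (if j = 0 then 0 else c $ (j - 1)))"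
          unfolding H_def hankel_def using i by (subst mat_mult_idx) (auto simp: E2_def)
        also have "\<dots> = (\<Sum>j<p'. x$(i+Suc j) * c $ j)"
          by (simp only: Suc_eq_plus1[symmetric] sum.lessThan_Suc_shift) simp
        also have "\<dots> = (H' *\<^sub>v c) $ (i+1)"
          unfolding H'_def hankel_def using i cc by (subst mat_mult_idx) auto
        also have "\<dots> = 0" using Hc' i by simp
        finally show "(H *\<^sub>v E2 c) $ i = 0\<^sub>v p $ i" using i by simp
      qed (use Hc in auto)
      moreover have "E2 c \<in> carrier_vec (p'+1)" unfolding E2_def by auto
      ultimately show ?thesis using mat_kernelI[OF Hc] by blast
    qed
    have kadd: "u + w \<in> mat_kernel H" if "u \<in> mat_kernel H" "w \<in> mat_kernel H" for u w
    proof -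
      have "u \<in> carrier_vec (p'+1)" "w \<in> carrier_vec (p'+1)"
        "H *\<^sub>v u = 0\<^sub>v p" "H *\<^sub>v w = 0\<^sub>v p"
        using mat_kernelD[OF Hc that(1)] mat_kernelD[OF Hc that(2)] by auto
      then show ?thesis using Hc by (intro mat_kernelI[OF Hc]) (auto simp: mult_add_distrib_mat_vec)
    qed
    have maps: "f v \<in> mat_kernel H" if v: "v \<in> mat_kernel G" for v
      unfolding f_def using kadd K2[OF K1[OF v]] mat_kernel_smult[OF Hc K3[OF a(1)]] by blast
    have add: "f (v + w) = f v + f w" if "v \<in> mat_kernel G" "w \<in> mat_kernel G" for v w
    proof -
      have "v \<in> carrier_vec (p'+1)" "w \<in> carrier_vec (p'+1)"
        using mat_kernelD[OF Gc that(1)] mat_kernelD[OF Gc that(2)] by auto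
      then show ?thesis by (intro eq_vecI) (auto simp: f_def E1_def E2_def bm_def algebra_simps)
    qed
    have smult: "f (c \<cdot>\<^sub>v v) = c \<cdot>\<^sub>v f v" if "v \<in> mat_kernel G" for c v
    proof -
      have "v \<in> carrier_vec (p'+1)"
        using mat_kernelD[OF Gc that(1)] by auto
      then show ?thesis by (intro eq_vecI) (auto simp: f_def E1_def E2_def bm_def algebra_simps)
    qed
    have inj: "v = 0\<^sub>v (p'+1)" if v: "v \<in> mat_kernel G" and fv: "f v = 0\<^sub>v (p'+1)" for v
    proof -
      have vc: "v \<in> carrier_vec (p'+1)" using mat_kernelD[OF Gc v] by auto
      have cK: "bm v \<in> mat_kernel H'" by (rule K1[OF v])
      have comp: "(f v) $ i = (if i < p' then bm v $ i else 0) + v $ p' * (if i = 0 then 0 else a $ (i - 1))"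
        if "i < p'+1" for i
        using that vc by (auto simp: f_def E1_def E2_def)
      have "(if k+1 < p' then bm v $ (k+1) else 0) = 0"
        using maxk[OF cK, of "k+1"] by auto
      moreover have "(f v) $ (k+1) = 0" using fv kp by simp
      ultimately have "v $ p' * a $ k = 0" using comp[of "k+1"] kp by simp
      then have t: "v $ p' = 0" using a(2) by simp
      show ?thesis
      proof (rule eq_vecI)
        show "dim_vec v = dim_vec (0\<^sub>v (p'+1) :: 'a vec)" using vc by simp
        fix i assume "i < dim_vec (0\<^sub>v (p'+1) :: 'a vec)"
        then have i: "i < p'+1" by simp
        show "v $ i = 0\<^sub>v (p'+1) $ i"
        proof (cases "i < p'")
          case True
          have "(f v) $ i = 0" using fv i by simp
          then have "bm v $ i = 0" using comp[OF i] True t by simp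
          then show ?thesis using True t i by (simp add: bm_def split: if_splits)
        next
          case False
          then have "i = p'" using i by simp
          then show ?thesis using t by simp
        qed
      qed
    qed
    have "kernel.dim (p'+1) G \<le> kernel.dim (p'+1) H"
      by (rule kdim_le_inj[OF Gc Hc maps add smult inj])
    then have "mrank H \<le> mrank H'" using rnH rnG rGH' by linarith
    then show ?thesis unfolding H_def H'_def .
  qed
qed

end
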